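(* Let $\varepsilon>0$ and $\mu=\frac{\varepsilon C(\mathbf{x}_{\mathrm{greedy}})}{2\log d_R}$, and let $\mathbf{x}^{(t)}$ be the accelerated projected gradient iterates with step size $\eta=\frac{4\mu}{d_R}$. If $t\ge\frac{5.1}{\varepsilon}\,n\sqrt{\log n}$, then \[ \widetilde{C}_\mu(\mathbf{x}^{(t)})\ \ge\ (1-\varepsilon)\cdot C(\mathbf{x}^* ). \]
   Context: Setting: bipartite graph $G=(L,R,E)$ with $L=[n]$, every $j\in R$ of degree $\deg(j)=|N(j)|\ge1$, weights $w_j\ge0$ with $\sum_jw_j=1$, integer $1\le k\le n$, $\varphi:\mathbb{Z}_{\ge0}\to\mathbb{R}$ concave nondecreasing with $\varphi(0)=0$, $\varphi(1)=1$, extended piecewise linearly to $\mathbb{R}_{\ge0}$. $d_R=\sum_jw_j\deg(j)$ (assumed $>1$), $C(\mathbf{x})=\sum_jw_j\varphi(\sum_{i\in N(j)}x_i)$, $\Delta_{n,k}=\{\mathbf{x}\in[0,1]^n:\sum_ix_i=k\}$, $\mathbf{x}^*\in\arg\max_{\Delta_{n,k}}C$. $\mathbf{x}_{\mathrm{greedy}}=\mathbf{1}_{S_k}$ where $S_0=\emptyset$ and $S_{t+1}=S_t\cup\{i\}$ for $i\in L\setminus S_t$ maximizing $C(S_t\cup\{i\})-C(S_t)$, with $C(S)=\sum_jw_j\varphi(|S\cap N(j)|)$. Smoothed objective: $\widetilde{C}_\mu(\mathbf{x})=\sum_jw_j\big(-\mu\log\sum_{i=1}^{\deg(j)}e^{-\ell_{j,i}(\mathbf{x})/\mu}\big)$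 with $\ell_{j,i}(\mathbf{x})=\varphi(i-1)+(\varphi(i)-\varphi(i-1))(\sum_{u\in N(j)}x_u-(i-1))$. Iterates: $\mathbf{x}^{(0)}=\mathbf{y}^{(0)}=\mathbf{x}_{\mathrm{greedy}}$, $\beta_0=1$, $\mathbf{x}^{(t+1)}=\Pi_{\Delta_{n,k}}(\mathbf{y}^{(t)}+\eta\nabla\widetilde{C}_\mu(\mathbf{y}^{(t)}))$, $\beta_{t+1}=(1+\sqrt{1+4\beta_t^2})/2$, $\mathbf{y}^{(t+1)}=\mathbf{x}^{(t+1)}+\frac{\beta_t-1}{\beta_{t+1}}(\mathbf{x}^{(t+1)}-\mathbf{x}^{(t)})$, with $\Pi_{\Delta_{n,k}}$ Euclidean projection. *)

theory Defs
  imports "HOL-Analysis.Analysis"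
begin

text \<open>Left vertex set L = [n] is modelled by the finite type 'n (n = CARD('n));
  vectors x in [0,1]^n are elements of real^'n. Right vertices are a finite set R
  of type 'r, with neighbourhoods N j (subsets of L).\<close>

definition phi_ext :: "(nat \<Rightarrow> real) \<Rightarrow> real \<Rightarrow> real" where
  "phi_ext \<phi> s = \<phi> (nat \<lfloor>s\<rfloor>) + (\<phi> (nat \<lfloor>s\<rfloor> + 1) - \<phi> (nat \<lfloor>s\<rfloor>)) * (s - of_int \<lfloor>s\<rfloor>)"

definition degR :: "'r set \<Rightarrow> ('r \<Rightarrow> 'n set) \<Rightarrow> ('r \<Rightarrow> real) \<Rightarrow> real" where
  "degR R N w = (\<Sum>j\<in>R. w j * real (card (N j)))"

definition covC :: "'r set \<Rightarrow> ('r \<Rightarrow> 'n::finite set) \<Rightarrow> ('r \<Rightarrow> real) \<Rightarrow> (nat \<Rightarrow> real)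
    \<Rightarrow> real^'n \<Rightarrow> real" where
  "covC R N w \<phi> x = (\<Sum>j\<in>R. w j * phi_ext \<phi> (\<Sum>u\<in>N j. x $ u))"

definition covS :: "'r set \<Rightarrow> ('r \<Rightarrow> 'n set) \<Rightarrow> ('r \<Rightarrow> real) \<Rightarrow> (nat \<Rightarrow> real)
    \<Rightarrow> 'n set \<Rightarrow> real" where
  "covS R N w \<phi> S = (\<Sum>j\<in>R. w j * \<phi> (card (S \<inter> N j)))"

definition simplexk :: "nat \<Rightarrow> (real^'n::finite) set" where
  "simplexk k = {x. (\<forall>i. 0 \<le> x $ i \<and> x $ i \<le> 1) \<and> (\<Sum>i\<in>UNIV. x $ i) = real k}"

definition is_greedy :: "'r set \<Rightarrow> ('r \<Rightarrow> 'n set) \<Rightarrow> ('r \<Rightarrow> real) \<Rightarrow> (nat \<Rightarrow> real)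
    \<Rightarrow> nat \<Rightarrow> (nat \<Rightarrow> 'n set) \<Rightarrow> bool" where
  "is_greedy R N w \<phi> k S \<longleftrightarrow> S 0 = {} \<and>
     (\<forall>t<k. \<exists>i. i \<notin> S t \<and> S (Suc t) = insert i (S t) \<and>
        (\<forall>i'. i' \<notin> S t \<longrightarrow>
           covS R N w \<phi> (insert i' (S t)) - covS R N w \<phi> (S t)
             \<le> covS R N w \<phi> (insert i (S t)) - covS R N w \<phi> (S t)))"

definition indic_vec :: "'n set \<Rightarrow> real^'n::finite" where
  "indic_vec S = (\<chi> i. if i \<in> S then 1 else 0)"

definition ell :: "('r \<Rightarrow> 'n::finite set) \<Rightarrow> (nat \<Rightarrow> real) \<Rightarrow> 'r \<Rightarrow> nat \<Rightarrow> real^'n \<Rightarrow> real" where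
  "ell N \<phi> j i x = \<phi> (i - 1) + (\<phi> i - \<phi> (i - 1)) * ((\<Sum>u\<in>N j. x $ u) - real (i - 1))"

definition smoothC :: "'r set \<Rightarrow> ('r \<Rightarrow> 'n::finite set) \<Rightarrow> ('r \<Rightarrow> real) \<Rightarrow> (nat \<Rightarrow> real)
    \<Rightarrow> real \<Rightarrow> real^'n \<Rightarrow> real" where
  "smoothC R N w \<phi> \<mu> x =
     (\<Sum>j\<in>R. w j * (- \<mu> * ln (\<Sum>i=1..card (N j). exp (- ell N \<phi> j i x / \<mu>))))"

definition grad :: "('a::real_inner \<Rightarrow> real) \<Rightarrow> 'a \<Rightarrow> 'a" where
  "grad f x = (THE D. GDERIV f x :> D)"

text \<open>Accelerated projected gradient ascent: state (x^(t), y^(t), beta_t).\<close>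
fun apg :: "(real^'n::finite) set \<Rightarrow> (real^'n \<Rightarrow> real^'n) \<Rightarrow> real \<Rightarrow> real^'n
    \<Rightarrow> nat \<Rightarrow> (real^'n) \<times> (real^'n) \<times> real" where
  "apg D g \<eta> x0 0 = (x0, x0, 1)"
| "apg D g \<eta> x0 (Suc t) =
     (let (x, y, \<beta>) = apg D g \<eta> x0 t;
          x' = closest_point D (y + \<eta> *\<^sub>R g y);
          \<beta>' = (1 + sqrt (1 + 4 * \<beta>\<^sup>2)) / 2;
          y' = x' + ((\<beta> - 1) / \<beta>') *\<^sub>R (x' - x)
      in (x', y', \<beta>'))"

definition apg_x :: "(real^'n::finite) set \<Rightarrow> (real^'n \<Rightarrow> real^'n) \<Rightarrow> real \<Rightarrow> real^'n
    \<Rightarrow> nat \<Rightarrow> real^'n" where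
  "apg_x D g \<eta> x0 t = fst (apg D g \<eta> x0 t)"

end

theory Submission
  imports Defs
begin

lemma taylor2_bounds:
  fixes f f' f'' :: "real \<Rightarrow> real"
  assumes d1: "\<And>x. (f has_real_derivative f' x) (at x)"
    and d2: "\<And>x. (f' has_real_derivative f'' x) (at x)"
    and up: "\<And>x. f'' x \<le> 0" and lo: "\<And>x. -K \<le> f'' x"
  shows "f b \<le> f a + f' a * (b - a) \<and> f a + f' a * (b - a) - K / 2 * (b - a)^2 \<le> f b"
proof (cases "b = a")
  case True then show ?thesis using lo[of 0] up[of 0] by simp
next
  case False
  define diff where "diff = (\<lambda>m::nat. if m = 0 then f else if m = 1 then f' else f'')"
  have "\<exists>t. (if b < a then b < t \<and> t < a else a < t \<and> t < b) \<and>
    f b = (\<Sum>m<2. (diff m a / fact m) * (b - a)^m) + (diff 2 t / fact 2) * (b - a)^2"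
    by (rule Taylor[where a="min a b" and b="max a b"]) (use False d1 d2 in \<open>auto simp: diff_def\<close>)
  then obtain t where t0: "f b = (\<Sum>m<2. (diff m a / fact m) * (b - a)^m) + (diff 2 t / fact 2) * (b - a)^2"
    by blast
  have t: "f b = f a + f' a * (b - a) + f'' t / 2 * (b - a)^2"
    using t0 by (simp add: diff_def numeral_2_eq_2 lessThan_Suc)
  have "f'' t / 2 * (b - a)^2 \<le> 0" using up[of t] by (simp add: mult_nonpos_nonneg)
  moreover have "- K / 2 * (b - a)^2 \<le> f'' t / 2 * (b - a)^2"
    using lo[of t] by (intro mult_right_mono) auto
  ultimately show ?thesis using t by auto
qed


lemma dl_anti:
  assumes cc: "\<forall>i. \<phi> (i + 2) - \<phi> (i + 1) \<le> \<phi> (i + 1) - (\<phi> i :: real)"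
    and ij: "i \<le> j"
  shows "\<phi> (Suc j) - \<phi> j \<le> \<phi> (Suc i) - \<phi> i"
  using ij
proof (induction j rule: dec_induct)
  case base then show ?case by simp
next
  case (step n)
  have "\<phi> (n + 2) - \<phi> (n + 1) \<le> \<phi> (n + 1) - \<phi> n" using cc by blast
  then show ?case using step by (simp add: numeral_2_eq_2)
qed

lemma chord:
  assumes cc: "\<forall>i. \<phi> (i + 2) - \<phi> (i + 1) \<le> \<phi> (i + 1) - (\<phi> i :: real)"
  shows "\<phi> m \<le> \<phi> p + (\<phi> (Suc p) - \<phi> p) * (real m - real p)"
proof (cases "p \<le> m")
  case True
  then show ?thesis
  proof (induction m rule: dec_induct)
    case base then show ?case by simp
  next
    case (step n)
    have "\<phi> (Suc n) - \<phi> n \<le> \<phi> (Suc p) - \<phi> p" using dl_anti[OF cc step(1)] .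
    then show ?case using step by (simp add: algebra_simps)
  qed
next
  case False
  then have "m \<le> p" by simp
  then show ?thesis
  proof (induction m rule: inc_induct)
    case base then show ?case by simp
  next
    case (step n)
    have "\<phi> (Suc p) - \<phi> p \<le> \<phi> (Suc n) - \<phi> n" using dl_anti[OF cc, of n p] step(2) by simp
    then show ?case using step by (simp add: algebra_simps)
  qed
qed

lemma phi_ext_nat: "phi_ext \<phi> (real m) = \<phi> m"
  by (simp add: phi_ext_def)

lemma phi_mono_le:
  fixes \<phi> :: "nat \<Rightarrow> real"
  assumes pm: "\<forall>i. \<phi> i \<le> (\<phi> (i + 1) :: real)" and "a \<le> b"
  shows "\<phi> a \<le> \<phi> b"
  using assms(2)
proof (induction b rule: dec_induct)
  case base then show ?case by simp
next
  case (step n) then show ?case using pm[rule_format, of n] by simp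
qed

lemma phi_ext_ge_min:
  assumes pm: "\<forall>i. \<phi> i \<le> (\<phi> (i + 1) :: real)" and p0: "\<phi> 0 = 0" and p1: "\<phi> 1 = 1"
    and s: "0 \<le> s"
  shows "min s 1 \<le> phi_ext \<phi> s"
proof (cases "s < 1")
  case True
  then have "\<lfloor>s\<rfloor> = 0" using s by (simp add: floor_eq_iff)
  then show ?thesis using p0 p1 True by (simp add: phi_ext_def)
next
  case False
  define m where "m = nat \<lfloor>s\<rfloor>"
  have "1 \<le> m" using False by (simp add: m_def le_nat_iff)
  have fr: "0 \<le> s - of_int \<lfloor>s\<rfloor>" by simp
  have "\<phi> 1 \<le> \<phi> m" using phi_mono_le[OF pm \<open>1 \<le> m\<close>] .
  moreover have "0 \<le> (\<phi> (m + 1) - \<phi> m) * (s - of_int \<lfloor>s\<rfloor>)"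
    using pm fr by simp
  ultimately show ?thesis using p1 False by (simp add: phi_ext_def m_def[symmetric])
qed

lemma phi_ext_le_ell:
  assumes cc: "\<forall>i. \<phi> (i + 2) - \<phi> (i + 1) \<le> \<phi> (i + 1) - (\<phi> i :: real)"
    and s: "0 \<le> s" and i: "1 \<le> i"
  shows "phi_ext \<phi> s \<le> \<phi> (i - 1) + (\<phi> i - \<phi> (i - 1)) * (s - real (i - 1))"
proof -
  define m where "m = nat \<lfloor>s\<rfloor>"
  define p where "p = i - 1"
  have ip: "i = Suc p" using i by (simp add: p_def)
  define th where "th = s - real m"
  have sm: "of_int \<lfloor>s\<rfloor> = real m" using s by (simp add: m_def)
  have ms: "real m \<le> s" "s < real m + 1"
    using sm of_int_floor_le[of s] real_of_int_floor_add_one_gt[of s] by linarith+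
  have th0: "0 \<le> th" "th \<le> 1" using ms by (simp_all add: th_def)
  have pe: "phi_ext \<phi> s = (1 - th) * \<phi> m + th * \<phi> (Suc m)"
    by (simp add: phi_ext_def m_def[symmetric] sm th_def algebra_simps)
  have c1: "\<phi> m \<le> \<phi> p + (\<phi> (Suc p) - \<phi> p) * (real m - real p)" by (rule chord[OF cc])
  have c2: "\<phi> (Suc m) \<le> \<phi> p + (\<phi> (Suc p) - \<phi> p) * (real (Suc m) - real p)" by (rule chord[OF cc])
  have "(1 - th) * \<phi> m + th * \<phi> (Suc m) \<le>
        (1 - th) * (\<phi> p + (\<phi> (Suc p) - \<phi> p) * (real m - real p)) +
        th * (\<phi> p + (\<phi> (Suc p) - \<phi> p) * (real (Suc m) - real p))"
    using th0 c1 c2 by (intro add_mono mult_left_mono) auto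
  also have "\<dots> = \<phi> p + (\<phi> (Suc p) - \<phi> p) * (s - real p)"
    by (simp add: th_def algebra_simps)
  finally have "phi_ext \<phi> s \<le> \<phi> p + (\<phi> (Suc p) - \<phi> p) * (s - real p)" using pe by simp
  then show ?thesis using ip by simp
qed


definition aa :: "(nat \<Rightarrow> real) \<Rightarrow> nat \<Rightarrow> real \<Rightarrow> real" where
  "aa \<phi> i s = \<phi> (i - 1) + (\<phi> i - \<phi> (i - 1)) * (s - real (i - 1))"
definition cf :: "(nat \<Rightarrow> real) \<Rightarrow> nat \<Rightarrow> real" where
  "cf \<phi> i = \<phi> i - \<phi> (i - 1)"
definition EE :: "real \<Rightarrow> (nat \<Rightarrow> real) \<Rightarrow> nat \<Rightarrow> real \<Rightarrow> real" where
  "EE \<mu> \<phi> i s = exp (- aa \<phi> i s / \<mu>)"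
definition ZZ :: "real \<Rightarrow> (nat \<Rightarrow> real) \<Rightarrow> nat \<Rightarrow> real \<Rightarrow> real" where
  "ZZ \<mu> \<phi> d s = (\<Sum>i=1..d. EE \<mu> \<phi> i s)"
definition Z1 :: "real \<Rightarrow> (nat \<Rightarrow> real) \<Rightarrow> nat \<Rightarrow> real \<Rightarrow> real" where
  "Z1 \<mu> \<phi> d s = (\<Sum>i=1..d. cf \<phi> i * EE \<mu> \<phi> i s)"
definition Z2 :: "real \<Rightarrow> (nat \<Rightarrow> real) \<Rightarrow> nat \<Rightarrow> real \<Rightarrow> real" where
  "Z2 \<mu> \<phi> d s = (\<Sum>i=1..d. (cf \<phi> i)\<^sup>2 * EE \<mu> \<phi> i s)"
definition hh :: "real \<Rightarrow> (nat \<Rightarrow> real) \<Rightarrow> nat \<Rightarrow> real \<Rightarrow> real" where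
  "hh \<mu> \<phi> d s = - \<mu> * ln (ZZ \<mu> \<phi> d s)"
definition h1 :: "real \<Rightarrow> (nat \<Rightarrow> real) \<Rightarrow> nat \<Rightarrow> real \<Rightarrow> real" where
  "h1 \<mu> \<phi> d s = Z1 \<mu> \<phi> d s / ZZ \<mu> \<phi> d s"
definition h2 :: "real \<Rightarrow> (nat \<Rightarrow> real) \<Rightarrow> nat \<Rightarrow> real \<Rightarrow> real" where
  "h2 \<mu> \<phi> d s = - (Z2 \<mu> \<phi> d s * ZZ \<mu> \<phi> d s - (Z1 \<mu> \<phi> d s)\<^sup>2) / (\<mu> * (ZZ \<mu> \<phi> d s)\<^sup>2)"

lemma EE_deriv: "\<mu> \<noteq> 0 \<Longrightarrow> (EE \<mu> \<phi> i has_real_derivative EE \<mu> \<phi> i s * (- cf \<phi> i / \<mu>)) (at s)"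
  unfolding EE_def aa_def cf_def
  by (auto intro!: derivative_eq_intros simp: field_simps)

lemma EE_pos: "0 < EE \<mu> \<phi> i s" by (simp add: EE_def)

lemma ZZ_pos: "1 \<le> d \<Longrightarrow> 0 < ZZ \<mu> \<phi> d s"
  unfolding ZZ_def by (intro sum_pos) (auto simp: EE_pos)

lemma ZZ_deriv: "\<mu> \<noteq> 0 \<Longrightarrow> (ZZ \<mu> \<phi> d has_real_derivative - Z1 \<mu> \<phi> d s / \<mu>) (at s)"
proof -
  assume m: "\<mu> \<noteq> 0"
  have "((\<lambda>s. \<Sum>i=1..d. EE \<mu> \<phi> i s) has_real_derivative (\<Sum>i=1..d. EE \<mu> \<phi> i s * (- cf \<phi> i / \<mu>))) (at s)"
    by (rule DERIV_sum) (rule EE_deriv[OF m])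
  moreover have "(\<Sum>i=1..d. EE \<mu> \<phi> i s * (- cf \<phi> i / \<mu>)) = - Z1 \<mu> \<phi> d s / \<mu>"
    unfolding Z1_def using m by (simp add: sum_divide_distrib sum_negf field_simps)
  ultimately show ?thesis by (simp add: ZZ_def[abs_def])
qed

lemma Z1_deriv: "\<mu> \<noteq> 0 \<Longrightarrow> (Z1 \<mu> \<phi> d has_real_derivative - Z2 \<mu> \<phi> d s / \<mu>) (at s)"
proof -
  assume m: "\<mu> \<noteq> 0"
  have "((\<lambda>s. \<Sum>i=1..d. cf \<phi> i * EE \<mu> \<phi> i s) has_real_derivative (\<Sum>i=1..d. cf \<phi> i * (EE \<mu> \<phi> i s * (- cf \<phi> i / \<mu>)))) (at s)"
    by (rule DERIV_sum) (intro DERIV_cmult EE_deriv[OF m])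
  moreover have "(\<Sum>i=1..d. cf \<phi> i * (EE \<mu> \<phi> i s * (- cf \<phi> i / \<mu>))) = - Z2 \<mu> \<phi> d s / \<mu>"
    unfolding Z2_def using m by (simp add: sum_divide_distrib sum_negf field_simps power2_eq_square)
  ultimately show ?thesis by (simp add: Z1_def[abs_def])
qed

lemma hh_deriv:
  assumes m: "\<mu> \<noteq> 0" and d: "1 \<le> d"
  shows "(hh \<mu> \<phi> d has_real_derivative h1 \<mu> \<phi> d s) (at s)"
proof -
  have "((\<lambda>s. - \<mu> * ln (ZZ \<mu> \<phi> d s)) has_real_derivative - \<mu> * ((- Z1 \<mu> \<phi> d s / \<mu>) / ZZ \<mu> \<phi> d s)) (at s)"
    using DERIV_cmult[OF DERIV_chain2[OF DERIV_ln_divide[OF ZZ_pos[OF d]] ZZ_deriv[OF m]], of "- \<mu>"]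
    by simp
  then show ?thesis using m by (simp add: hh_def[abs_def] h1_def)
qed

lemma h1_deriv:
  assumes m: "\<mu> \<noteq> 0" and d: "1 \<le> d"
  shows "(h1 \<mu> \<phi> d has_real_derivative h2 \<mu> \<phi> d s) (at s)"
proof -
  have z: "ZZ \<mu> \<phi> d s \<noteq> 0" using ZZ_pos[OF d] by (metis less_irrefl)
  have "((\<lambda>s. Z1 \<mu> \<phi> d s / ZZ \<mu> \<phi> d s) has_real_derivative
     ((- Z2 \<mu> \<phi> d s / \<mu>) * ZZ \<mu> \<phi> d s - Z1 \<mu> \<phi> d s * (- Z1 \<mu> \<phi> d s / \<mu>)) / (ZZ \<mu> \<phi> d s * ZZ \<mu> \<phi> d s)) (at s)"
    by (intro DERIV_divide Z1_deriv ZZ_deriv m z)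
  moreover have "((- Z2 \<mu> \<phi> d s / \<mu>) * ZZ \<mu> \<phi> d s - Z1 \<mu> \<phi> d s * (- Z1 \<mu> \<phi> d s / \<mu>)) / (ZZ \<mu> \<phi> d s * ZZ \<mu> \<phi> d s)
     = h2 \<mu> \<phi> d s"
    using m z by (simp add: h2_def field_simps power2_eq_square)
  ultimately show ?thesis by (simp add: h1_def[abs_def])
qed


lemma cf_bounds:
  assumes cc: "\<forall>i. \<phi> (i + 2) - \<phi> (i + 1) \<le> \<phi> (i + 1) - (\<phi> i :: real)"
    and pm: "\<forall>i. \<phi> i \<le> \<phi> (i + 1)" and p0: "\<phi> 0 = 0" and p1: "\<phi> 1 = 1"
    and i: "1 \<le> i"
  shows "0 \<le> cf \<phi> i \<and> cf \<phi> i \<le> 1"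
proof -
  obtain p where ip: "i = Suc p" using i by (cases i) auto
  have "\<phi> (Suc p) - \<phi> p \<le> \<phi> (Suc 0) - \<phi> 0" using dl_anti[OF cc, of 0 p] by simp
  moreover have "\<phi> p \<le> \<phi> (Suc p)" using pm by simp
  ultimately show ?thesis using p0 p1 ip by (simp add: cf_def)
qed

lemma h2_bounds:
  assumes m: "0 < \<mu>" and d: "1 \<le> d" and cb: "\<forall>i\<in>{1..d}. 0 \<le> cf \<phi> i \<and> cf \<phi> i \<le> 1"
  shows "h2 \<mu> \<phi> d s \<le> 0 \<and> - (1 / (4 * \<mu>)) \<le> h2 \<mu> \<phi> d s"
proof -
  define Z where "Z = ZZ \<mu> \<phi> d s"
  define A where "A = Z1 \<mu> \<phi> d s"
  define B where "B = Z2 \<mu> \<phi> d s"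
  have Zp: "0 < Z" unfolding Z_def using ZZ_pos[OF d] .
  have A0: "0 \<le> A" unfolding A_def Z1_def using cb by (intro sum_nonneg) (auto intro!: mult_nonneg_nonneg less_imp_le[OF EE_pos])
  have BA: "B \<le> A" unfolding A_def B_def Z2_def Z1_def
  proof (intro sum_mono)
    fix i assume "i \<in> {1..d}"
    then have "0 \<le> cf \<phi> i" "cf \<phi> i \<le> 1" using cb by auto
    then have "(cf \<phi> i)\<^sup>2 \<le> cf \<phi> i" using mult_left_le[of "cf \<phi> i" "cf \<phi> i"] by (simp add: power2_eq_square)
    then show "(cf \<phi> i)\<^sup>2 * EE \<mu> \<phi> i s \<le> cf \<phi> i * EE \<mu> \<phi> i s"
      using EE_pos[of \<mu> \<phi> i s] by (intro mult_right_mono) auto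
  qed
  have CS: "A\<^sup>2 \<le> Z * B"
  proof -
    have "(\<Sum>i=1..d. sqrt (EE \<mu> \<phi> i s) * (cf \<phi> i * sqrt (EE \<mu> \<phi> i s)))\<^sup>2
      \<le> (\<Sum>i=1..d. (sqrt (EE \<mu> \<phi> i s))\<^sup>2) * (\<Sum>i=1..d. (cf \<phi> i * sqrt (EE \<mu> \<phi> i s))\<^sup>2)"
      by (rule Cauchy_Schwarz_ineq_sum)
    moreover have "\<And>i. sqrt (EE \<mu> \<phi> i s) * (cf \<phi> i * sqrt (EE \<mu> \<phi> i s)) = cf \<phi> i * EE \<mu> \<phi> i s"
    proof -
      fix i
      have "sqrt (EE \<mu> \<phi> i s) * (cf \<phi> i * sqrt (EE \<mu> \<phi> i s)) = cf \<phi> i * (sqrt (EE \<mu> \<phi> i s) * sqrt (EE \<mu> \<phi> i s))"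
        by (simp only: ac_simps)
      also have "\<dots> = cf \<phi> i * EE \<mu> \<phi> i s" using EE_pos[of \<mu> \<phi> i s] by simp
      finally show "sqrt (EE \<mu> \<phi> i s) * (cf \<phi> i * sqrt (EE \<mu> \<phi> i s)) = cf \<phi> i * EE \<mu> \<phi> i s" .
    qed
    moreover have "\<And>i. (sqrt (EE \<mu> \<phi> i s))\<^sup>2 = EE \<mu> \<phi> i s"
      using EE_pos by (simp add: less_imp_le)
    moreover have "\<And>i. (cf \<phi> i * sqrt (EE \<mu> \<phi> i s))\<^sup>2 = (cf \<phi> i)\<^sup>2 * EE \<mu> \<phi> i s"
      using EE_pos by (simp add: power_mult_distrib less_imp_le)
    ultimately show ?thesis by (simp add: A_def Z_def B_def Z1_def ZZ_def Z2_def)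
  qed
  have AZ: "A \<le> Z" unfolding A_def Z_def Z1_def ZZ_def
  proof (intro sum_mono)
    fix i assume "i \<in> {1..d}"
    then show "cf \<phi> i * EE \<mu> \<phi> i s \<le> EE \<mu> \<phi> i s"
      using cb EE_pos[of \<mu> \<phi> i s] by (simp add: mult_le_cancel_right1)
  qed
  have num0: "0 \<le> B * Z - A\<^sup>2" using CS by (simp add: mult.commute)
  have "B * Z \<le> A * Z" using BA Zp by (simp add: mult_right_mono)
  moreover have "0 \<le> (Z - 2 * A)\<^sup>2" by simp
  moreover have "(Z - 2 * A)\<^sup>2 = Z\<^sup>2 - 4 * (A * Z) + 4 * A\<^sup>2" by (simp add: power2_eq_square algebra_simps)
  ultimately have num1: "B * Z - A\<^sup>2 \<le> Z\<^sup>2 / 4" by linarith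
  have h2e: "h2 \<mu> \<phi> d s = - ((B * Z - A\<^sup>2) / (\<mu> * Z\<^sup>2))" unfolding h2_def A_def B_def Z_def by (rule minus_divide_left[symmetric])
  have den: "0 < \<mu> * Z\<^sup>2" using m Zp by simp
  have q0: "0 \<le> (B * Z - A\<^sup>2) / (\<mu> * Z\<^sup>2)" using num0 den by (rule divide_nonneg_pos)
  have "(B * Z - A\<^sup>2) / (\<mu> * Z\<^sup>2) \<le> (Z\<^sup>2 / 4) / (\<mu> * Z\<^sup>2)"
    using num1 den by (rule divide_right_mono[OF _ less_imp_le])
  also have "\<dots> = 1 / (4 * \<mu>)" using Zp m by simp
  finally have q1: "(B * Z - A\<^sup>2) / (\<mu> * Z\<^sup>2) \<le> 1 / (4 * \<mu>)" .
  have "h2 \<mu> \<phi> d s \<le> 0" unfolding h2e using q0 by linarith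
  moreover have "- (1 / (4 * \<mu>)) \<le> h2 \<mu> \<phi> d s" unfolding h2e using q1 by linarith
  ultimately show ?thesis by simp
qed

lemma hh_bounds:
  assumes m: "0 < \<mu>" and d: "1 \<le> d" and cb: "\<forall>i\<in>{1..d}. 0 \<le> cf \<phi> i \<and> cf \<phi> i \<le> 1"
  shows "hh \<mu> \<phi> d b \<le> hh \<mu> \<phi> d a + h1 \<mu> \<phi> d a * (b - a)"
    and "hh \<mu> \<phi> d a + h1 \<mu> \<phi> d a * (b - a) - 1 / (8 * \<mu>) * (b - a)\<^sup>2 \<le> hh \<mu> \<phi> d b"
proof -
  have m0: "\<mu> \<noteq> 0" using m by simp
  have T: "hh \<mu> \<phi> d b \<le> hh \<mu> \<phi> d a + h1 \<mu> \<phi> d a * (b - a) \<and>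
     hh \<mu> \<phi> d a + h1 \<mu> \<phi> d a * (b - a) - (1 / (4 * \<mu>)) / 2 * (b - a)\<^sup>2 \<le> hh \<mu> \<phi> d b"
    by (rule taylor2_bounds[where f'' = "h2 \<mu> \<phi> d"])
       (use hh_deriv[OF m0 d] h1_deriv[OF m0 d] h2_bounds[OF m d cb] in auto)
  then show "hh \<mu> \<phi> d b \<le> hh \<mu> \<phi> d a + h1 \<mu> \<phi> d a * (b - a)" by simp
  show "hh \<mu> \<phi> d a + h1 \<mu> \<phi> d a * (b - a) - 1 / (8 * \<mu>) * (b - a)\<^sup>2 \<le> hh \<mu> \<phi> d b"
    using T by simp
qed

lemma hh_smooth_err:
  assumes cc: "\<forall>i. \<phi> (i + 2) - \<phi> (i + 1) \<le> \<phi> (i + 1) - (\<phi> i :: real)"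
    and m: "0 < \<mu>" and d: "1 \<le> d" and s: "0 \<le> s"
  shows "phi_ext \<phi> s - \<mu> * ln (real d) \<le> hh \<mu> \<phi> d s"
proof -
  have "ZZ \<mu> \<phi> d s \<le> (\<Sum>i=1..d. exp (- phi_ext \<phi> s / \<mu>))"
    unfolding ZZ_def EE_def
  proof (intro sum_mono)
    fix i assume "i \<in> {1..d}"
    then have "phi_ext \<phi> s \<le> aa \<phi> i s" unfolding aa_def using phi_ext_le_ell[OF cc s] by auto
    then show "exp (- aa \<phi> i s / \<mu>) \<le> exp (- phi_ext \<phi> s / \<mu>)"
      using m by (simp add: divide_right_mono)
  qed
  also have "\<dots> = real d * exp (- phi_ext \<phi> s / \<mu>)" by simp
  finally have le: "ZZ \<mu> \<phi> d s \<le> real d * exp (- phi_ext \<phi> s / \<mu>)" .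
  have "ln (ZZ \<mu> \<phi> d s) \<le> ln (real d * exp (- phi_ext \<phi> s / \<mu>))"
    by (rule ln_mono[OF le ZZ_pos[OF d]])
  also have "\<dots> = ln (real d) - phi_ext \<phi> s / \<mu>" using d by (simp add: ln_mult)
  finally have "ln (ZZ \<mu> \<phi> d s) \<le> ln (real d) - phi_ext \<phi> s / \<mu>" .
  then have "\<mu> * ln (ZZ \<mu> \<phi> d s) \<le> \<mu> * ln (real d) - phi_ext \<phi> s"
    using m by (simp add: field_simps)
  then show ?thesis by (simp add: hh_def)
qed


definition sj :: "('r \<Rightarrow> 'n::finite set) \<Rightarrow> 'r \<Rightarrow> real^'n \<Rightarrow> real" where
  "sj N j x = (\<Sum>u\<in>N j. x $ u)"

definition Ct :: "'r set \<Rightarrow> ('r \<Rightarrow> 'n::finite set) \<Rightarrow> ('r \<Rightarrow> real) \<Rightarrow> (nat \<Rightarrow> real) \<Rightarrow> real \<Rightarrow> real^'n \<Rightarrow> real" where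
  "Ct R N w \<phi> \<mu> x = (\<Sum>j\<in>R. w j * hh \<mu> \<phi> (card (N j)) (sj N j x))"

definition Gv :: "'r set \<Rightarrow> ('r \<Rightarrow> 'n::finite set) \<Rightarrow> ('r \<Rightarrow> real) \<Rightarrow> (nat \<Rightarrow> real) \<Rightarrow> real \<Rightarrow> real^'n \<Rightarrow> real^'n" where
  "Gv R N w \<phi> \<mu> x = (\<chi> u. \<Sum>j\<in>R. w j * h1 \<mu> \<phi> (card (N j)) (sj N j x) * (if u \<in> N j then 1 else 0))"

lemma smoothC_eq: "smoothC R N w \<phi> \<mu> = Ct R N w \<phi> \<mu>"
  by (rule ext) (simp add: smoothC_def Ct_def hh_def ZZ_def EE_def aa_def ell_def sj_def)

lemma sj_diff: "sj N j y - sj N j x = sj N j (y - x)"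
  by (simp add: sj_def sum_subtractf)

lemma indic_sum: "(\<Sum>u\<in>UNIV. (if u \<in> A then 1 else 0) * f u) = (\<Sum>u\<in>A. f u :: real)"
  for A :: "'n::finite set"
proof -
  have "(\<Sum>u\<in>UNIV. (if u \<in> A then 1 else 0) * f u) = (\<Sum>u\<in>UNIV. if u \<in> A then f u else 0)"
    by (rule sum.cong) auto
  also have "\<dots> = (\<Sum>u\<in>A. f u)" by (simp add: sum.If_cases)
  finally show ?thesis .
qed

lemma inner_Gv:
  assumes "finite R"
  shows "v \<bullet> Gv R N w \<phi> \<mu> x = (\<Sum>j\<in>R. w j * h1 \<mu> \<phi> (card (N j)) (sj N j x) * sj N j v)"
proof -
  have "v \<bullet> Gv R N w \<phi> \<mu> x = (\<Sum>u\<in>UNIV. v $ u * (\<Sum>j\<in>R. w j * h1 \<mu> \<phi> (card (N j)) (sj N j x) * (if u \<in> N j then 1 else 0)))"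
    by (simp add: inner_vec_def Gv_def)
  also have "\<dots> = (\<Sum>u\<in>UNIV. \<Sum>j\<in>R. w j * h1 \<mu> \<phi> (card (N j)) (sj N j x) * ((if u \<in> N j then 1 else 0) * v $ u))"
    by (simp add: sum_distrib_left ac_simps)
  also have "\<dots> = (\<Sum>j\<in>R. \<Sum>u\<in>UNIV. w j * h1 \<mu> \<phi> (card (N j)) (sj N j x) * ((if u \<in> N j then 1 else 0) * v $ u))"
    by (rule sum.swap)
  also have "\<dots> = (\<Sum>j\<in>R. w j * h1 \<mu> \<phi> (card (N j)) (sj N j x) * sj N j v)"
    by (simp add: sum_distrib_left[symmetric] indic_sum sj_def)
  finally show ?thesis .
qed

lemma sj_sq: "(sj N j v)\<^sup>2 \<le> real (card (N j)) * (norm v)\<^sup>2"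
proof -
  have "(sj N j v)\<^sup>2 \<le> (\<Sum>u\<in>N j. (v $ u)\<^sup>2) * real (card (N j))"
    unfolding sj_def by (rule sum_squared_le_sum_of_squares)
  also have "(\<Sum>u\<in>N j. (v $ u)\<^sup>2) \<le> (\<Sum>u\<in>UNIV. (v $ u)\<^sup>2)"
    by (rule sum_mono2) auto
  then have "(\<Sum>u\<in>N j. (v $ u)\<^sup>2) * real (card (N j)) \<le> (\<Sum>u\<in>UNIV. (v $ u)\<^sup>2) * real (card (N j))"
    by (rule mult_right_mono) simp
  also have "(\<Sum>u\<in>UNIV. (v $ u)\<^sup>2) = v \<bullet> v"
    by (simp add: inner_vec_def power2_eq_square)
  also have "\<dots> = (norm v)\<^sup>2" by (simp add: power2_norm_eq_inner)
  finally show ?thesis by (simp add: mult.commute)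
qed


lemma Ct_bounds:
  fixes R :: "'r set" and N :: "'r \<Rightarrow> 'n::finite set"
  assumes fR: "finite R" and dp: "\<forall>j\<in>R. N j \<noteq> {}" and wn: "\<forall>j\<in>R. 0 \<le> w j" and m: "0 < \<mu>"
    and cb: "\<forall>i\<ge>1. 0 \<le> cf \<phi> i \<and> cf \<phi> i \<le> 1"
  shows "Ct R N w \<phi> \<mu> y \<le> Ct R N w \<phi> \<mu> x + (y - x) \<bullet> Gv R N w \<phi> \<mu> x"
    and "Ct R N w \<phi> \<mu> x + (y - x) \<bullet> Gv R N w \<phi> \<mu> x - degR R N w * ((norm (y - x))\<^sup>2 / (8 * \<mu>)) \<le> Ct R N w \<phi> \<mu> y"
proof -
  define v where "v = y - x"
  have dj: "1 \<le> card (N j)" if "j \<in> R" for j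
    using dp that by (simp add: Suc_le_eq card_gt_0_iff)
  have cbj: "\<forall>i\<in>{1..card (N j)}. 0 \<le> cf \<phi> i \<and> cf \<phi> i \<le> 1" for j using cb by auto
  have up: "w j * hh \<mu> \<phi> (card (N j)) (sj N j y) \<le> w j * hh \<mu> \<phi> (card (N j)) (sj N j x) + w j * h1 \<mu> \<phi> (card (N j)) (sj N j x) * sj N j v"
    if j: "j \<in> R" for j
  proof -
    have "hh \<mu> \<phi> (card (N j)) (sj N j y) \<le> hh \<mu> \<phi> (card (N j)) (sj N j x) + h1 \<mu> \<phi> (card (N j)) (sj N j x) * (sj N j y - sj N j x)"
      by (rule hh_bounds(1)[OF m dj[OF j] cbj])
    then show ?thesis using wn j by (simp add: v_def sj_diff mult_left_mono distrib_left[symmetric] mult.assoc)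
  qed
  have lo: "w j * hh \<mu> \<phi> (card (N j)) (sj N j x) + w j * h1 \<mu> \<phi> (card (N j)) (sj N j x) * sj N j v
      - w j * real (card (N j)) * ((norm v)\<^sup>2 / (8 * \<mu>)) \<le> w j * hh \<mu> \<phi> (card (N j)) (sj N j y)"
    if j: "j \<in> R" for j
  proof -
    have a: "hh \<mu> \<phi> (card (N j)) (sj N j x) + h1 \<mu> \<phi> (card (N j)) (sj N j x) * (sj N j y - sj N j x)
       - 1 / (8 * \<mu>) * (sj N j y - sj N j x)\<^sup>2 \<le> hh \<mu> \<phi> (card (N j)) (sj N j y)"
      by (rule hh_bounds(2)[OF m dj[OF j] cbj])
    have b: "1 / (8 * \<mu>) * (sj N j v)\<^sup>2 \<le> real (card (N j)) * ((norm v)\<^sup>2 / (8 * \<mu>))"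
      using sj_sq[of N j v] m by (simp add: field_simps)
    have "hh \<mu> \<phi> (card (N j)) (sj N j x) + h1 \<mu> \<phi> (card (N j)) (sj N j x) * sj N j v
       - real (card (N j)) * ((norm v)\<^sup>2 / (8 * \<mu>)) \<le> hh \<mu> \<phi> (card (N j)) (sj N j y)"
      using a b by (simp add: v_def sj_diff)
    from mult_left_mono[OF this, of "w j"] show ?thesis using wn j by (simp add: algebra_simps)
  qed
  have "Ct R N w \<phi> \<mu> y \<le> (\<Sum>j\<in>R. w j * hh \<mu> \<phi> (card (N j)) (sj N j x) + w j * h1 \<mu> \<phi> (card (N j)) (sj N j x) * sj N j v)"
    unfolding Ct_def by (rule sum_mono) (rule up)
  also have "\<dots> = Ct R N w \<phi> \<mu> x + v \<bullet> Gv R N w \<phi> \<mu> x"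
    by (simp add: Ct_def inner_Gv[OF fR] sum.distrib)
  finally show "Ct R N w \<phi> \<mu> y \<le> Ct R N w \<phi> \<mu> x + (y - x) \<bullet> Gv R N w \<phi> \<mu> x" by (simp add: v_def)
  have "(\<Sum>j\<in>R. w j * hh \<mu> \<phi> (card (N j)) (sj N j x) + w j * h1 \<mu> \<phi> (card (N j)) (sj N j x) * sj N j v
      - w j * real (card (N j)) * ((norm v)\<^sup>2 / (8 * \<mu>))) \<le> Ct R N w \<phi> \<mu> y"
    unfolding Ct_def by (rule sum_mono) (rule lo)
  moreover have "(\<Sum>j\<in>R. w j * hh \<mu> \<phi> (card (N j)) (sj N j x) + w j * h1 \<mu> \<phi> (card (N j)) (sj N j x) * sj N j v
      - w j * real (card (N j)) * ((norm v)\<^sup>2 / (8 * \<mu>)))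
      = Ct R N w \<phi> \<mu> x + v \<bullet> Gv R N w \<phi> \<mu> x - degR R N w * ((norm v)\<^sup>2 / (8 * \<mu>))"
    by (simp add: Ct_def inner_Gv[OF fR] sum.distrib sum_subtractf degR_def sum_distrib_right sum_divide_distrib)
  ultimately show "Ct R N w \<phi> \<mu> x + (y - x) \<bullet> Gv R N w \<phi> \<mu> x - degR R N w * ((norm (y - x))\<^sup>2 / (8 * \<mu>)) \<le> Ct R N w \<phi> \<mu> y"
    by (simp add: v_def)
qed

lemma Ct_deriv:
  fixes R :: "'r set" and N :: "'r \<Rightarrow> 'n::finite set"
  assumes fR: "finite R" and dp: "\<forall>j\<in>R. N j \<noteq> {}" and m: "0 < \<mu>"
  shows "(Ct R N w \<phi> \<mu> has_derivative (\<lambda>h. h \<bullet> Gv R N w \<phi> \<mu> x)) (at x)"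
proof -
  have dj: "1 \<le> card (N j)" if "j \<in> R" for j
    using dp that by (simp add: Suc_le_eq card_gt_0_iff)
  have m0: "\<mu> \<noteq> 0" using m by simp
  have sjd: "(sj N j has_derivative sj N j) (at x)" for j
    unfolding sj_def[abs_def] by (intro has_derivative_sum bounded_linear.has_derivative[OF bounded_linear_vec_nth] has_derivative_ident)
  have "((\<lambda>x. \<Sum>j\<in>R. w j * hh \<mu> \<phi> (card (N j)) (sj N j x)) has_derivative
      (\<lambda>h. \<Sum>j\<in>R. w j * (sj N j h * h1 \<mu> \<phi> (card (N j)) (sj N j x)))) (at x)"
    apply (rule has_derivative_sum)
    apply (rule has_derivative_mult_right)
    apply (rule DERIV_compose_FDERIV[OF hh_deriv[OF m0 dj] sjd])
    apply assumption
    done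
  moreover have "(\<lambda>h. \<Sum>j\<in>R. w j * (sj N j h * h1 \<mu> \<phi> (card (N j)) (sj N j x))) = (\<lambda>h. h \<bullet> Gv R N w \<phi> \<mu> x)"
    by (rule ext) (simp add: inner_Gv[OF fR] ac_simps)
  ultimately show ?thesis by (simp add: Ct_def[abs_def])
qed

lemma grad_Ct:
  fixes R :: "'r set" and N :: "'r \<Rightarrow> 'n::finite set"
  assumes fR: "finite R" and dp: "\<forall>j\<in>R. N j \<noteq> {}" and m: "0 < \<mu>"
  shows "grad (smoothC R N w \<phi> \<mu>) = Gv R N w \<phi> \<mu>"
proof (rule ext)
  fix x
  have g: "GDERIV (Ct R N w \<phi> \<mu>) x :> Gv R N w \<phi> \<mu> x"
    unfolding gderiv_def by (rule Ct_deriv[OF fR dp m])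
  have "(THE D. GDERIV (Ct R N w \<phi> \<mu>) x :> D) = Gv R N w \<phi> \<mu> x"
  proof (rule the_equality)
    fix D assume "GDERIV (Ct R N w \<phi> \<mu>) x :> D"
    then have "(\<lambda>h. h \<bullet> D) = (\<lambda>h. h \<bullet> Gv R N w \<phi> \<mu> x)"
      using g unfolding gderiv_def by (rule has_derivative_unique)
    then have "(D - Gv R N w \<phi> \<mu> x) \<bullet> D = (D - Gv R N w \<phi> \<mu> x) \<bullet> Gv R N w \<phi> \<mu> x" by metis
    then have "(D - Gv R N w \<phi> \<mu> x) \<bullet> (D - Gv R N w \<phi> \<mu> x) = 0" by (simp add: inner_diff_right)
    then show "D = Gv R N w \<phi> \<mu> x" by simp
  qed (rule g)
  then show "grad (smoothC R N w \<phi> \<mu>) x = Gv R N w \<phi> \<mu> x" by (simp add: grad_def smoothC_eq)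
qed


lemma prox_ineq:
  fixes f :: "real^'n::finite \<Rightarrow> real" and g :: "real^'n \<Rightarrow> real^'n"
  assumes cl: "closed D" and cv: "convex D" and z: "z \<in> D" and L: "0 < L" and eL: "\<eta> * L = 1"
    and conc: "\<And>x y. f y \<le> f x + (y - x) \<bullet> g x"
    and smooth: "\<And>x y. f x + (y - x) \<bullet> g x - L / 2 * (norm (y - x))\<^sup>2 \<le> f y"
  shows "L / 2 * (norm (closest_point D (y + \<eta> *\<^sub>R g y) - y))\<^sup>2
          + L * ((closest_point D (y + \<eta> *\<^sub>R g y) - y) \<bullet> (y - z))
         \<le> f (closest_point D (y + \<eta> *\<^sub>R g y)) - f z"
proof -
  define a where "a = y + \<eta> *\<^sub>R g y"
  define p where "p = closest_point D a"
  define v where "v = p - y"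
  have ne: "D \<noteq> {}" using z by auto
  have pD: "p \<in> D" unfolding p_def by (rule closest_point_in_set[OF cl ne])
  have "(a - p) \<bullet> (z - p) \<le> 0"
    by (rule any_closest_point_dot[OF cv cl pD z]) (use closest_point_exists(2)[OF cl ne] in \<open>simp add: p_def\<close>)
  moreover have "a - p = \<eta> *\<^sub>R g y - v" by (simp add: a_def v_def algebra_simps)
  ultimately have "\<eta> * (g y \<bullet> (z - p)) \<le> v \<bullet> (z - p)" by (simp add: inner_diff_left)
  then have "L * (\<eta> * (g y \<bullet> (z - p))) \<le> L * (v \<bullet> (z - p))" using L by simp
  then have gi: "g y \<bullet> (z - p) \<le> L * (v \<bullet> (z - p))" using eL by (simp add: mult.assoc[symmetric] mult.commute)
  have s1: "f y + (p - y) \<bullet> g y - L / 2 * (norm (p - y))\<^sup>2 \<le> f p" by (rule smooth)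
  have s2: "f z \<le> f y + (z - y) \<bullet> g y" by (rule conc)
  define V where "V = v \<bullet> v"
  define W where "W = v \<bullet> (y - z)"
  have e1: "v \<bullet> (z - p) = - V - W" by (simp add: V_def W_def v_def inner_simps)
  have e1': "L * (v \<bullet> (z - p)) = - (L * V) - L * W" unfolding e1 by (simp add: algebra_simps)
  have e2: "(p - y) \<bullet> g y - (z - y) \<bullet> g y = - (g y \<bullet> (z - p))" by (simp add: inner_simps inner_commute)
  have e3: "(norm (p - y))\<^sup>2 = V" by (simp add: power2_norm_eq_inner V_def v_def)
  have e4: "L * V = 2 * (L / 2 * V)" by simp
  have "L / 2 * V + L * W \<le> f p - f z"
  proof -
    have s1': "f y + (p - y) \<bullet> g y - L / 2 * V \<le> f p" using s1 unfolding e3 .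
    show ?thesis using s1' s2 gi e1' e2 e4 by linarith
  qed
  then show ?thesis using e3 by (simp add: W_def v_def p_def a_def)
qed

lemma fista_inv:
  fixes f :: "real^'n::finite \<Rightarrow> real" and g :: "real^'n \<Rightarrow> real^'n"
  assumes cl: "closed D" and cv: "convex D" and x0D: "x0 \<in> D" and XD: "X \<in> D"
    and L: "0 < L" and eL: "\<eta> * L = 1"
    and conc: "\<And>x y. f y \<le> f x + (y - x) \<bullet> g x"
    and smooth: "\<And>x y. f x + (y - x) \<bullet> g x - L / 2 * (norm (y - x))\<^sup>2 \<le> f y"
  shows "case apg D g \<eta> x0 t of (x, y, \<beta>) \<Rightarrow> x \<in> D \<and> 1 + real t / 2 \<le> \<beta> \<and>
     2 / L * (\<beta>\<^sup>2 - \<beta>) * (f X - f x) + (norm (\<beta> *\<^sub>R y - (\<beta> - 1) *\<^sub>R x - X))\<^sup>2 \<le> (norm (x0 - X))\<^sup>2"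
proof (induction t)
  case 0
  then show ?case using x0D by simp
next
  case (Suc t)
  obtain x y \<beta> where st: "apg D g \<eta> x0 t = (x, y, \<beta>)" by (cases "apg D g \<eta> x0 t") auto
  have xD: "x \<in> D" and b1: "1 + real t / 2 \<le> \<beta>"
    and IH: "2 / L * (\<beta>\<^sup>2 - \<beta>) * (f X - f x) + (norm (\<beta> *\<^sub>R y - (\<beta> - 1) *\<^sub>R x - X))\<^sup>2 \<le> (norm (x0 - X))\<^sup>2"
    using Suc.IH st by auto
  define x' where "x' = closest_point D (y + \<eta> *\<^sub>R g y)"
  define \<beta>' where "\<beta>' = (1 + sqrt (1 + 4 * \<beta>\<^sup>2)) / 2"
  define y' where "y' = x' + ((\<beta> - 1) / \<beta>') *\<^sub>R (x' - x)"
  have st': "apg D g \<eta> x0 (Suc t) = (x', y', \<beta>')"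
    by (simp add: st Let_def x'_def \<beta>'_def y'_def)
  have ne: "D \<noteq> {}" using x0D by auto
  have x'D: "x' \<in> D" unfolding x'_def by (rule closest_point_in_set[OF cl ne])
  define r where "r = sqrt (1 + 4 * \<beta>\<^sup>2)"
  have r2: "r\<^sup>2 = 1 + 4 * \<beta>\<^sup>2" unfolding r_def by (simp add: add_nonneg_nonneg)
  have bpos: "0 \<le> \<beta>" using b1 by simp
  have r_ge: "2 * \<beta> \<le> r" unfolding r_def by (rule real_le_rsqrt) (simp add: power_mult_distrib)
  have b'ge: "\<beta> + 1 / 2 \<le> \<beta>'" using r_ge by (simp add: \<beta>'_def r_def[symmetric])
  have b'pos: "0 < \<beta>'" using b'ge bpos by simp
  have b'sq: "\<beta>'\<^sup>2 - \<beta>' = \<beta>\<^sup>2" unfolding \<beta>'_def r_def[symmetric]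
    using r2 by (simp add: power2_eq_square field_simps)
  have yid: "\<beta>' *\<^sub>R y' - (\<beta>' - 1) *\<^sub>R x' = \<beta> *\<^sub>R x' - (\<beta> - 1) *\<^sub>R x"
  proof -
    have "\<beta>' *\<^sub>R y' = \<beta>' *\<^sub>R x' + (\<beta> - 1) *\<^sub>R (x' - x)"
      using b'pos by (simp add: y'_def scaleR_add_right)
    then show ?thesis by (simp add: algebra_simps)
  qed
  define v where "v = x' - y"
  have P3: "L / 2 * (norm v)\<^sup>2 + L * (v \<bullet> (y - x)) \<le> f x' - f x"
    using prox_ineq[OF cl cv xD L eL conc smooth, of y] by (simp add: v_def x'_def)
  have P4: "L / 2 * (norm v)\<^sup>2 + L * (v \<bullet> (y - X)) \<le> f x' - f X"
    using prox_ineq[OF cl cv XD L eL conc smooth, of y] by (simp add: v_def x'_def)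
  define a where "a = \<beta> *\<^sub>R y - (\<beta> - 1) *\<^sub>R x - X"
  define V where "V = (norm v)\<^sup>2"
  define P where "P = v \<bullet> (y - x)"
  define Q where "Q = v \<bullet> (y - X)"
  have vec1: "\<beta> *\<^sub>R x' - (\<beta> - 1) *\<^sub>R x - X = \<beta> *\<^sub>R v + a"
    by (simp add: v_def a_def algebra_simps)
  have va: "v \<bullet> a = (\<beta> - 1) * P + Q"
    by (simp add: a_def P_def Q_def inner_simps algebra_simps)
  have nrm: "(norm (\<beta> *\<^sub>R v + a))\<^sup>2 = \<beta>\<^sup>2 * V + 2 * \<beta> * (v \<bullet> a) + (norm a)\<^sup>2"
  proof -
    have "(norm (\<beta> *\<^sub>R v + a))\<^sup>2 = (\<beta> *\<^sub>R v + a) \<bullet> (\<beta> *\<^sub>R v + a)" by (rule power2_norm_eq_inner)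
    also have "\<dots> = \<beta>\<^sup>2 * (v \<bullet> v) + 2 * \<beta> * (v \<bullet> a) + a \<bullet> a"
      by (simp add: inner_simps inner_commute power2_eq_square algebra_simps)
    also have "\<dots> = \<beta>\<^sup>2 * V + 2 * \<beta> * (v \<bullet> a) + (norm a)\<^sup>2" by (simp add: V_def power2_norm_eq_inner)
    finally show ?thesis .
  qed
  have b0: "0 \<le> \<beta> - 1" using b1 by simp
  have S3: "(\<beta> - 1) * (L / 2 * V + L * P) \<le> (\<beta> - 1) * (f x' - f x)"
    using P3 b0 by (simp add: V_def P_def mult_left_mono)
  have S: "\<beta> * (L / 2 * V) + L * ((\<beta> - 1) * P + Q) \<le> \<beta> * f x' - (\<beta> - 1) * f x - f X"
  proof -
    have P4': "L / 2 * V + L * Q \<le> f x' - f X" using P4 by (simp add: V_def Q_def)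
    have i1: "\<beta> * (L / 2 * V) + L * ((\<beta> - 1) * P + Q) = (\<beta> - 1) * (L / 2 * V + L * P) + (L / 2 * V + L * Q)"
      by (simp add: field_simps)
    have i2: "\<beta> * f x' - (\<beta> - 1) * f x - f X = (\<beta> - 1) * (f x' - f x) + (f x' - f X)"
      by (simp add: algebra_simps)
    show ?thesis unfolding i1 i2 using S3 P4' by linarith
  qed
  have S2: "(2 * \<beta> / L) * (\<beta> * (L / 2 * V) + L * ((\<beta> - 1) * P + Q))
      \<le> (2 * \<beta> / L) * (\<beta> * f x' - (\<beta> - 1) * f x - f X)"
    using S bpos L by (intro mult_left_mono) auto
  have S2l: "(2 * \<beta> / L) * (\<beta> * (L / 2 * V) + L * ((\<beta> - 1) * P + Q)) = \<beta>\<^sup>2 * V + 2 * \<beta> * ((\<beta> - 1) * P + Q)"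
    using L by (simp add: field_simps power2_eq_square)
  have S2r: "(2 * \<beta> / L) * (\<beta> * f x' - (\<beta> - 1) * f x - f X)
     = 2 / L * (\<beta>\<^sup>2 - \<beta>) * (f X - f x) - 2 / L * \<beta>\<^sup>2 * (f X - f x')"
    using L by (simp add: field_simps power2_eq_square)
  have key: "2 / L * \<beta>\<^sup>2 * (f X - f x') + (norm (\<beta> *\<^sub>R x' - (\<beta> - 1) *\<^sub>R x - X))\<^sup>2
      \<le> 2 / L * (\<beta>\<^sup>2 - \<beta>) * (f X - f x) + (norm a)\<^sup>2"
    using S2 unfolding S2l S2r vec1 nrm va by linarith
  have "2 / L * (\<beta>'\<^sup>2 - \<beta>') * (f X - f x') + (norm (\<beta>' *\<^sub>R y' - (\<beta>' - 1) *\<^sub>R x' - X))\<^sup>2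
      \<le> (norm (x0 - X))\<^sup>2"
    using key IH unfolding b'sq yid a_def by linarith
  moreover have "1 + real (Suc t) / 2 \<le> \<beta>'" using b1 b'ge by (simp add: field_simps)
  ultimately show ?case using st' x'D by simp
qed


lemma fista_rate:
  fixes f :: "real^'n::finite \<Rightarrow> real" and g :: "real^'n \<Rightarrow> real^'n"
  assumes cl: "closed D" and cv: "convex D" and x0D: "x0 \<in> D" and XD: "X \<in> D"
    and L: "0 < L" and eL: "\<eta> * L = 1"
    and conc: "\<And>x y. f y \<le> f x + (y - x) \<bullet> g x"
    and smooth: "\<And>x y. f x + (y - x) \<bullet> g x - L / 2 * (norm (y - x))\<^sup>2 \<le> f y"
    and t: "1 \<le> t"
  shows "f X - f (apg_x D g \<eta> x0 t) \<le> 2 * L * (norm (x0 - X))\<^sup>2 / (real t)\<^sup>2"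
proof -
  obtain x y \<beta> where st: "apg D g \<eta> x0 t = (x, y, \<beta>)" by (cases "apg D g \<eta> x0 t") auto
  have b1: "1 + real t / 2 \<le> \<beta>"
    and I: "2 / L * (\<beta>\<^sup>2 - \<beta>) * (f X - f x) + (norm (\<beta> *\<^sub>R y - (\<beta> - 1) *\<^sub>R x - X))\<^sup>2 \<le> (norm (x0 - X))\<^sup>2"
    using fista_inv[OF cl cv x0D XD L eL conc smooth, of t] st by auto
  have xe: "apg_x D g \<eta> x0 t = x" by (simp add: apg_x_def st)
  have tp: "0 < real t" using t by simp
  have bb: "(real t)\<^sup>2 / 4 \<le> \<beta>\<^sup>2 - \<beta>"
  proof -
    have "(real t / 2) * (real t / 2) \<le> \<beta> * (\<beta> - 1)"
      using b1 tp by (intro mult_mono) auto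
    then show ?thesis by (simp add: power2_eq_square algebra_simps)
  qed
  show ?thesis
  proof (cases "f X - f x \<le> 0")
    case True
    have "0 \<le> 2 * L * (norm (x0 - X))\<^sup>2 / (real t)\<^sup>2" using L by simp
    then show ?thesis unfolding xe using True by linarith
  next
    case False
    then have pos: "0 < f X - f x" by simp
    have "2 / L * ((real t)\<^sup>2 / 4) * (f X - f x) \<le> 2 / L * (\<beta>\<^sup>2 - \<beta>) * (f X - f x)"
      using bb pos L by (intro mult_right_mono mult_left_mono) auto
    also have "\<dots> \<le> (norm (x0 - X))\<^sup>2"
      using I zero_le_power2[of "norm (\<beta> *\<^sub>R y - (\<beta> - 1) *\<^sub>R x - X)"] by linarith
    finally have "2 / L * ((real t)\<^sup>2 / 4) * (f X - f x) \<le> (norm (x0 - X))\<^sup>2" .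
    then have "(f X - f x) * (real t)\<^sup>2 \<le> 2 * L * (norm (x0 - X))\<^sup>2"
      using L by (simp add: field_simps)
    then show ?thesis using xe tp by (simp add: field_simps)
  qed
qed


lemma final_arith:
  fixes \<epsilon> c CX dR k n t Ctx CtX \<mu> :: real
  assumes e: "0 < \<epsilon>" and n2: "2 \<le> n" and d1: "1 < dR" and dn: "dR \<le> n" and k0: "0 < k"
    and cge: "dR / n \<le> c" and CXge: "k / n \<le> CX" and cle: "c \<le> CX"
    and tl: "5.1 / \<epsilon> * n * sqrt (ln n) \<le> t" and tp: "0 < t"
    and mu: "\<mu> = \<epsilon> * c / (2 * ln dR)"
    and sm: "CX - \<mu> * ln dR \<le> CtX"
    and fr: "CtX - Ctx \<le> dR * k / (\<mu> * t\<^sup>2)"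
  shows "(1 - \<epsilon>) * CX \<le> Ctx"
proof -
  have np: "0 < n" using n2 by simp
  have lnd: "0 < ln dR" using d1 by simp
  have lnn: "0 < ln n" using n2 by simp
  have lndn: "ln dR \<le> ln n" using dn d1 by simp
  have cp: "0 < c" using cge d1 np by (meson divide_pos_pos less_le_trans zero_less_one less_trans)
  have mup: "0 < \<mu>" using mu e cp lnd by simp
  have mul: "\<mu> * ln dR = \<epsilon> * c / 2" using mu lnd by simp
  have t2: "(5.1 / \<epsilon> * n * sqrt (ln n))\<^sup>2 \<le> t\<^sup>2"
    using tl e np lnn by (intro power_mono) auto
  have "(5.1 / \<epsilon> * n * sqrt (ln n))\<^sup>2 = 26.01 * n\<^sup>2 * ln n / \<epsilon>\<^sup>2"
    using lnn by (simp add: power_mult_distrib power_divide)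
  have sq: "(sqrt (ln n))\<^sup>2 = ln n" using lnn by simp
  have t2': "26.01 * n\<^sup>2 * ln n \<le> \<epsilon>\<^sup>2 * t\<^sup>2" using t2 e by (simp add: field_simps power_mult_distrib power_divide sq)
  have prod: "dR * k \<le> n\<^sup>2 * (c * CX)"
  proof -
    have "dR \<le> n * c" using cge np by (simp add: field_simps)
    moreover have "k \<le> n * CX" using CXge np by (simp add: field_simps)
    ultimately have "dR * k \<le> (n * c) * (n * CX)"
      using d1 k0 by (intro mult_mono) auto
    then show ?thesis by (simp add: power2_eq_square algebra_simps)
  qed
  have key: "4 * (dR * k) * ln dR \<le> \<epsilon>\<^sup>2 * t\<^sup>2 * (c * CX)"
  proof -
    have "4 * (dR * k) * ln dR \<le> 4 * (n\<^sup>2 * (c * CX)) * ln n"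
      by (rule mult_mono) (use prod lndn lnd cp cle in auto)
    also have "\<dots> \<le> 26.01 * n\<^sup>2 * ln n * (c * CX)"
      using cp cle lnn by (simp add: mult_right_mono)
    also have "\<dots> \<le> \<epsilon>\<^sup>2 * t\<^sup>2 * (c * CX)"
      using t2' cp cle by (intro mult_right_mono) auto
    finally show ?thesis .
  qed
  have E: "dR * k / (\<mu> * t\<^sup>2) \<le> \<epsilon> * CX / 2"
  proof -
    have "dR * k / (\<mu> * t\<^sup>2) = 2 * (dR * k) * ln dR / (\<epsilon> * c * t\<^sup>2)"
      unfolding mu using lnd e cp tp by (simp add: field_simps)
    also have "\<dots> \<le> \<epsilon> * CX / 2"
      using key e cp tp by (simp add: field_simps power2_eq_square)
    finally show ?thesis .
  qed
  have "\<epsilon> * c / 2 \<le> \<epsilon> * CX / 2" using cle e by simp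
  moreover have sm': "CX - \<epsilon> * c / 2 \<le> CtX" using sm mul by simp
  moreover have "(1 - \<epsilon>) * CX = CX - \<epsilon> * CX" by (simp add: algebra_simps)
  ultimately show ?thesis using fr E by linarith
qed


lemma simplex_closed: "closed (simplexk k :: (real^'n::finite) set)"
  unfolding simplexk_def
  by (intro closed_Collect_conj closed_Collect_all closed_Collect_le closed_Collect_eq continuous_intros)

lemma simplex_convex: "convex (simplexk k :: (real^'n::finite) set)"
proof (rule convexI)
  fix x y :: "real^'n" and u v :: real
  assume xD: "x \<in> simplexk k" and yD: "y \<in> simplexk k"
    and u: "0 \<le> u" and v: "0 \<le> v" and uv: "u + v = 1"
  have x: "\<forall>i. 0 \<le> x $ i \<and> x $ i \<le> 1" and y: "\<forall>i. 0 \<le> y $ i \<and> y $ i \<le> 1"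
    and sx: "(\<Sum>i\<in>UNIV. x $ i) = real k" and sy: "(\<Sum>i\<in>UNIV. y $ i) = real k"
    using xD yD by (auto simp: simplexk_def)
  have c: "\<forall>i. 0 \<le> u * x $ i + v * y $ i \<and> u * x $ i + v * y $ i \<le> 1"
  proof
    fix i
    have "u * x $ i \<le> u" using x u by (simp add: mult_left_le)
    moreover have "v * y $ i \<le> v" using y v by (simp add: mult_left_le)
    ultimately show "0 \<le> u * x $ i + v * y $ i \<and> u * x $ i + v * y $ i \<le> 1"
      using x y u v uv by simp
  qed
  have "(\<Sum>i\<in>UNIV. u * x $ i + v * y $ i) = u * real k + v * real k"
    using sx sy by (simp add: sum.distrib sum_distrib_left[symmetric])
  also have "\<dots> = (u + v) * real k" by (simp add: distrib_right)
  finally have s: "(\<Sum>i\<in>UNIV. u * x $ i + v * y $ i) = real k" using uv by simp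
  show "u *\<^sub>R x + v *\<^sub>R y \<in> simplexk k"
    unfolding simplexk_def using c s by simp
qed

lemma sum_indic_card: "finite A \<Longrightarrow> (\<Sum>u\<in>A. if u \<in> S then 1 else 0) = real (card (A \<inter> S))"
  by (simp add: sum.If_cases)

lemma covC_indic:
  fixes N :: "'r \<Rightarrow> 'n::finite set"
  shows "covC R N w \<phi> (indic_vec S) = covS R N w \<phi> S"
proof -
  have "(\<Sum>u\<in>N j. indic_vec S $ u) = real (card (S \<inter> N j))" for j
    by (simp add: indic_vec_def sum_indic_card Int_commute)
  then show ?thesis by (simp add: covC_def covS_def phi_ext_nat)
qed

lemma covS_mono:
  fixes N :: "'r \<Rightarrow> 'n::finite set"
  assumes wn: "\<forall>j\<in>R. 0 \<le> w j" and pm: "\<forall>i. \<phi> i \<le> \<phi> (i + 1)" and ST: "S \<subseteq> T"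
  shows "covS R N w \<phi> S \<le> covS R N w \<phi> T"
  unfolding covS_def
proof (rule sum_mono)
  fix j assume j: "j \<in> R"
  have "card (S \<inter> N j) \<le> card (T \<inter> N j)" using ST by (intro card_mono) auto
  then have "\<phi> (card (S \<inter> N j)) \<le> \<phi> (card (T \<inter> N j))" by (rule phi_mono_le[OF pm])
  then show "w j * \<phi> (card (S \<inter> N j)) \<le> w j * \<phi> (card (T \<inter> N j))"
    using wn j by (simp add: mult_left_mono)
qed

lemma greedy_facts:
  fixes N :: "'r \<Rightarrow> 'n::finite set"
  assumes g: "is_greedy R N w \<phi> k S"
  shows "t \<le> k \<Longrightarrow> card (S t) = t"
    and "1 \<le> t \<Longrightarrow> t \<le> k \<Longrightarrow> S 1 \<subseteq> S t"
proof -
  have S0: "S 0 = {}" and st: "\<forall>t<k. \<exists>i. i \<notin> S t \<and> S (Suc t) = insert i (S t)"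
    using g unfolding is_greedy_def by blast+
  show "t \<le> k \<Longrightarrow> card (S t) = t"
  proof (induction t)
    case 0 then show ?case using S0 by simp
  next
    case (Suc t)
    have "t < k" using Suc.prems by simp
    then obtain i where "i \<notin> S t" "S (Suc t) = insert i (S t)" using st by blast
    then show ?case using Suc by simp
  qed
  show "1 \<le> t \<Longrightarrow> t \<le> k \<Longrightarrow> S 1 \<subseteq> S t"
  proof (induction t rule: dec_induct)
    case base then show ?case by simp
  next
    case (step n)
    have "n < k" using step by simp
    then obtain i where "S (Suc n) = insert i (S n)" using st by blast
    then show ?case using step by auto
  qed
qed

lemma greedy_first:
  fixes N :: "'r \<Rightarrow> 'n::finite set"
  assumes g: "is_greedy R N w \<phi> k S" and k: "1 \<le> k" and fR: "finite R"
    and p0: "\<phi> 0 = 0" and p1: "\<phi> 1 = 1"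
  shows "degR R N w / real CARD('n) \<le> covS R N w \<phi> (S 1)"
proof -
  have S0: "S 0 = {}" and st: "\<forall>t<k. \<exists>i. i \<notin> S t \<and> S (Suc t) = insert i (S t) \<and>
        (\<forall>i'. i' \<notin> S t \<longrightarrow>
           covS R N w \<phi> (insert i' (S t)) - covS R N w \<phi> (S t)
             \<le> covS R N w \<phi> (insert i (S t)) - covS R N w \<phi> (S t))"
    using g unfolding is_greedy_def by blast+
  obtain i where S1: "S 1 = {i}" and mx: "\<forall>i'. covS R N w \<phi> {i'} \<le> covS R N w \<phi> {i}"
    using st[rule_format, of 0] k S0 by auto
  have single: "covS R N w \<phi> {i'} = (\<Sum>j\<in>R. w j * (if i' \<in> N j then 1 else 0))" for i'
    unfolding covS_def by (rule sum.cong) (auto simp: p0 p1[unfolded One_nat_def])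
  have "(\<Sum>i'\<in>UNIV. covS R N w \<phi> {i'}) = (\<Sum>j\<in>R. \<Sum>i'\<in>UNIV. w j * (if i' \<in> N j then 1 else 0))"
    unfolding single by (rule sum.swap)
  also have "\<dots> = degR R N w"
    unfolding degR_def by (rule sum.cong) (auto simp: sum_distrib_left[symmetric] sum_indic_card)
  finally have sd: "(\<Sum>i'\<in>UNIV. covS R N w \<phi> {i'}) = degR R N w" .
  have "(\<Sum>i'\<in>(UNIV::'n set). covS R N w \<phi> {i'}) \<le> (\<Sum>i'\<in>(UNIV::'n set). covS R N w \<phi> {i})"
    by (rule sum_mono) (use mx in auto)
  then have "degR R N w \<le> real CARD('n) * covS R N w \<phi> {i}" using sd by simp
  then show ?thesis using S1 by (simp add: field_simps)
qed


lemma xg_in: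
  fixes N :: "'r \<Rightarrow> 'n::finite set"
  assumes g: "is_greedy R N w \<phi> k S"
  shows "indic_vec (S k) \<in> simplexk k"
proof -
  have "card (S k) = k" using greedy_facts(1)[OF g] by simp
  then show ?thesis
    by (simp add: simplexk_def indic_vec_def sum_indic_card)
qed

lemma uniform_lb:
  fixes N :: "'r \<Rightarrow> 'n::finite set" and X :: "real^'n"
  assumes dp: "\<forall>j\<in>R. N j \<noteq> {}" and wn: "\<forall>j\<in>R. 0 \<le> w j" and ws: "(\<Sum>j\<in>R. w j) = 1"
    and k: "k \<le> CARD('n)"
    and pm: "\<forall>i. \<phi> i \<le> \<phi> (i + 1)" and p0: "\<phi> 0 = 0" and p1: "\<phi> 1 = 1"
    and Xmax: "\<forall>x\<in>simplexk k. covC R N w \<phi> x \<le> covC R N w \<phi> X"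
  shows "real k / real CARD('n) \<le> covC R N w \<phi> X"
proof -
  define n where "n = real CARD('n)"
  have np: "0 < n" by (simp add: n_def)
  define z :: "real^'n" where "z = (\<chi> i. real k / n)"
  have kn0: "0 \<le> real k / n" using np by simp
  have kn: "real k / n \<le> 1" using k np by (simp add: n_def)
  have zD: "z \<in> simplexk k" using kn np by (simp add: simplexk_def z_def n_def)
  have "real k / n \<le> phi_ext \<phi> (\<Sum>u\<in>N j. z $ u)" if j: "j \<in> R" for j
  proof -
    have c1: "1 \<le> real (card (N j))" using dp j by (simp add: Suc_le_eq card_gt_0_iff)
    have sz: "(\<Sum>u\<in>N j. z $ u) = real (card (N j)) * (real k / n)" by (simp add: z_def)
    have sz0: "0 \<le> (\<Sum>u\<in>N j. z $ u)" unfolding sz using kn0 by (intro mult_nonneg_nonneg) auto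
    note sz
    moreover have "real k / n \<le> real (card (N j)) * (real k / n)"
    proof -
      have "1 * (real k / n) \<le> real (card (N j)) * (real k / n)"
        by (rule mult_right_mono[OF _ kn0]) (use c1 in simp)
      then show ?thesis by simp
    qed
    ultimately have "real k / n \<le> min (\<Sum>u\<in>N j. z $ u) 1" using kn by simp
    also have "\<dots> \<le> phi_ext \<phi> (\<Sum>u\<in>N j. z $ u)"
      by (rule phi_ext_ge_min[OF pm p0 p1 sz0])
    finally show ?thesis .
  qed
  then have "(\<Sum>j\<in>R. w j * (real k / n)) \<le> covC R N w \<phi> z"
    unfolding covC_def using wn by (intro sum_mono mult_left_mono) auto
  moreover have "(\<Sum>j\<in>R. w j * (real k / n)) = real k / n"
    using ws sum_distrib_right[of w R "real k / n", symmetric] by simp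
  ultimately show ?thesis using Xmax zD by (force simp: n_def)
qed

lemma smooth_err_vec:
  fixes N :: "'r \<Rightarrow> 'n::finite set" and x :: "real^'n"
  assumes fR: "finite R" and dp: "\<forall>j\<in>R. N j \<noteq> {}" and wn: "\<forall>j\<in>R. 0 \<le> w j" and ws: "(\<Sum>j\<in>R. w j) = 1"
    and cc: "\<forall>i. \<phi> (i + 2) - \<phi> (i + 1) \<le> \<phi> (i + 1) - \<phi> i"
    and m: "0 < \<mu>" and xD: "x \<in> simplexk k" and dR: "0 < degR R N w"
  shows "covC R N w \<phi> x - \<mu> * ln (degR R N w) \<le> Ct R N w \<phi> \<mu> x"
proof -
  define dR where "dR = degR R N w"
  have dj: "1 \<le> card (N j)" if "j \<in> R" for j
    using dp that by (simp add: Suc_le_eq card_gt_0_iff)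
  have x0: "0 \<le> sj N j x" for j using xD by (simp add: simplexk_def sj_def sum_nonneg)
  have dRp: "0 < dR" using dR by (simp add: dR_def)
  have jen: "ln (real (card (N j))) \<le> ln dR + real (card (N j)) / dR - 1" if j: "j \<in> R" for j
  proof -
    have cp: "0 < real (card (N j))" using dj[OF j] by simp
    have "ln (real (card (N j)) / dR) \<le> real (card (N j)) / dR - 1"
      by (rule ln_le_minus_one) (use cp dR in \<open>simp add: dR_def\<close>)
    moreover have "ln (real (card (N j)) / dR) = ln (real (card (N j))) - ln dR"
      using cp dRp dp j by (simp add: ln_div)
    ultimately show ?thesis by simp
  qed
  have per: "w j * phi_ext \<phi> (\<Sum>u\<in>N j. x $ u) - w j * (\<mu> * (ln dR + real (card (N j)) / dR - 1))
      \<le> w j * hh \<mu> \<phi> (card (N j)) (sj N j x)" if j: "j \<in> R" for j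
  proof -
    have "phi_ext \<phi> (sj N j x) - \<mu> * ln (real (card (N j))) \<le> hh \<mu> \<phi> (card (N j)) (sj N j x)"
      by (rule hh_smooth_err[OF cc m dj[OF j] x0])
    moreover have "\<mu> * ln (real (card (N j))) \<le> \<mu> * (ln dR + real (card (N j)) / dR - 1)"
      using jen[OF j] m by simp
    ultimately have "phi_ext \<phi> (sj N j x) - \<mu> * (ln dR + real (card (N j)) / dR - 1) \<le> hh \<mu> \<phi> (card (N j)) (sj N j x)"
      by linarith
    from mult_left_mono[OF this, of "w j"] show ?thesis using wn j by (simp add: sj_def right_diff_distrib)
  qed
  have "(\<Sum>j\<in>R. w j * phi_ext \<phi> (\<Sum>u\<in>N j. x $ u) - w j * (\<mu> * (ln dR + real (card (N j)) / dR - 1)))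
      \<le> Ct R N w \<phi> \<mu> x"
    unfolding Ct_def by (rule sum_mono) (rule per)
  moreover have "(\<Sum>j\<in>R. w j * (\<mu> * (ln dR + real (card (N j)) / dR - 1))) = \<mu> * ln dR"
  proof -
    have "(\<Sum>j\<in>R. w j * (\<mu> * (ln dR + real (card (N j)) / dR - 1)))
        = \<mu> * ((\<Sum>j\<in>R. w j) * ln dR + (\<Sum>j\<in>R. w j * real (card (N j))) / dR - (\<Sum>j\<in>R. w j))"
      by (simp add: algebra_simps sum.distrib sum_subtractf sum_distrib_left sum_distrib_right sum_divide_distrib)
    also have "\<dots> = \<mu> * ln dR" using ws dR by (simp add: dR_def degR_def[symmetric])
    finally show ?thesis .
  qed
  ultimately show ?thesis by (simp add: covC_def sum_subtractf dR_def)
qed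

lemma degR_le:
  fixes N :: "'r \<Rightarrow> 'n::finite set"
  assumes wn: "\<forall>j\<in>R. 0 \<le> w j" and ws: "(\<Sum>j\<in>R. w j) = 1"
  shows "degR R N w \<le> real CARD('n)"
proof -
  have "degR R N w \<le> (\<Sum>j\<in>R. w j * real CARD('n))"
    unfolding degR_def
  proof (rule sum_mono)
    fix j assume "j \<in> R"
    moreover have "card (N j) \<le> CARD('n)" by (rule card_mono) auto
    ultimately show "w j * real (card (N j)) \<le> w j * real CARD('n)" using wn by (simp add: mult_left_mono)
  qed
  also have "\<dots> = real CARD('n)" using ws by (simp add: sum_distrib_right[symmetric])
  finally show ?thesis .
qed

lemma dist_bound:
  fixes X :: "real^'n::finite"
  assumes XD: "X \<in> simplexk k" and card: "card T = k"
  shows "(norm (indic_vec T - X))\<^sup>2 \<le> 2 * real k"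
proof -
  have "(norm (indic_vec T - X))\<^sup>2 = (indic_vec T - X) \<bullet> (indic_vec T - X)"
    by (rule power2_norm_eq_inner)
  also have "\<dots> = (\<Sum>i\<in>UNIV. (indic_vec T $ i - X $ i)\<^sup>2)"
    by (simp add: inner_vec_def power2_eq_square)
  also have "\<dots> \<le> (\<Sum>i\<in>UNIV. indic_vec T $ i + X $ i)"
  proof (rule sum_mono)
    fix i
    have x: "0 \<le> X $ i" "X $ i \<le> 1" using XD by (auto simp: simplexk_def)
    have xx: "X $ i * X $ i \<le> X $ i" using mult_left_le[of "X $ i" "X $ i"] x by simp
    show "(indic_vec T $ i - X $ i)\<^sup>2 \<le> indic_vec T $ i + X $ i"
    proof (cases "i \<in> T")
      case True
      then show ?thesis using x xx by (simp add: indic_vec_def power2_eq_square algebra_simps)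
    next
      case False
      then show ?thesis using x xx by (simp add: indic_vec_def power2_eq_square)
    qed
  qed
  also have "\<dots> = real (card T) + real k"
    using XD by (simp add: sum.distrib indic_vec_def sum_indic_card simplexk_def)
  finally show ?thesis using card by simp
qed


theorem mainTheorem8:
  fixes R :: "'r set" and N :: "'r \<Rightarrow> 'n::finite set" and w :: "'r \<Rightarrow> real"
    and \<phi> :: "nat \<Rightarrow> real" and k :: nat and S :: "nat \<Rightarrow> 'n set"
    and xstar :: "real^'n" and \<epsilon> :: real and t :: nat
  assumes R_fin: "finite R"
    and deg_pos: "\<forall>j\<in>R. N j \<noteq> {}"
    and w_nonneg: "\<forall>j\<in>R. 0 \<le> w j"
    and w_sum: "(\<Sum>j\<in>R. w j) = 1"
    and k_bounds: "1 \<le> k" "k \<le> CARD('n)"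
    and phi_concave: "\<forall>i. \<phi> (i + 2) - \<phi> (i + 1) \<le> \<phi> (i + 1) - \<phi> i"
    and phi_mono: "\<forall>i. \<phi> i \<le> \<phi> (i + 1)"
    and phi0: "\<phi> 0 = 0" and phi1: "\<phi> 1 = 1"
    and dR: "degR R N w > 1"
    and xstar_in: "xstar \<in> simplexk k"
    and xstar_max: "\<forall>x\<in>simplexk k. covC R N w \<phi> x \<le> covC R N w \<phi> xstar"
    and greedy: "is_greedy R N w \<phi> k S"
    and eps: "\<epsilon> > 0"
    and t_large: "real t \<ge> 5.1 / \<epsilon> * real CARD('n) * sqrt (ln (real CARD('n)))"
  shows
    "let xg = indic_vec (S k);
         \<mu> = \<epsilon> * covC R N w \<phi> xg / (2 * ln (degR R N w));
         \<eta> = 4 * \<mu> / degR R N w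
     in smoothC R N w \<phi> \<mu> (apg_x (simplexk k) (grad (smoothC R N w \<phi> \<mu>)) \<eta> xg t)
          \<ge> (1 - \<epsilon>) * covC R N w \<phi> xstar"
proof -
  define n where "n = real CARD('n)"
  define xg where "xg = indic_vec (S k)"
  define c where "c = covC R N w \<phi> xg"
  define d where "d = degR R N w"
  define \<mu> where "\<mu> = \<epsilon> * c / (2 * ln d)"
  define \<eta> where "\<eta> = 4 * \<mu> / d"
  define L where "L = d / (4 * \<mu>)"
  define X where "X = xstar"
  define f where "f = smoothC R N w \<phi> \<mu>"
  define g where "g = grad (smoothC R N w \<phi> \<mu>)"
  define xt where "xt = apg_x (simplexk k) g \<eta> xg t"
  have d1: "1 < d" using dR by (simp add: d_def)
  have dn: "d \<le> n" unfolding d_def n_def by (rule degR_le[OF w_nonneg w_sum])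
  have n2: "2 \<le> n"
  proof -
    have "1 < CARD('n)" using d1 dn by (simp add: n_def)
    then show ?thesis by (simp add: n_def)
  qed
  have xgD: "xg \<in> simplexk k" unfolding xg_def by (rule xg_in[OF greedy])
  have cS: "c = covS R N w \<phi> (S k)" by (simp add: c_def xg_def covC_indic)
  have S1k: "S 1 \<subseteq> S k" using greedy_facts(2)[OF greedy, of k] k_bounds by simp
  have cge: "d / n \<le> c"
  proof -
    have "d / n \<le> covS R N w \<phi> (S 1)"
      unfolding d_def n_def by (rule greedy_first[OF greedy k_bounds(1) R_fin phi0 phi1])
    also have "\<dots> \<le> covS R N w \<phi> (S k)" by (rule covS_mono[OF w_nonneg phi_mono S1k])
    finally show ?thesis using cS by simp
  qed
  have cle: "c \<le> covC R N w \<phi> X" using xstar_max xgD by (simp add: c_def X_def)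
  have CXge: "real k / n \<le> covC R N w \<phi> X"
    unfolding n_def X_def by (rule uniform_lb[OF deg_pos w_nonneg w_sum k_bounds(2) phi_mono phi0 phi1 xstar_max])
  have np: "0 < n" using n2 by simp
  have cp: "0 < c" using cge d1 np by (meson divide_pos_pos less_le_trans zero_less_one less_trans)
  have lnd: "0 < ln d" using d1 by simp
  have mup: "0 < \<mu>" using eps cp lnd by (simp add: \<mu>_def)
  have Lp: "0 < L" using mup d1 by (simp add: L_def)
  have eL: "\<eta> * L = 1" using mup d1 by (simp add: \<eta>_def L_def)
  have cb: "\<forall>i\<ge>1. 0 \<le> cf \<phi> i \<and> cf \<phi> i \<le> 1"
    using cf_bounds[OF phi_concave phi_mono phi0 phi1] by blast
  have fe: "f = Ct R N w \<phi> \<mu>" by (simp add: f_def smoothC_eq)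
  have ge: "g = Gv R N w \<phi> \<mu>" unfolding g_def by (rule grad_Ct[OF R_fin deg_pos mup])
  have conc: "\<And>x y. f y \<le> f x + (y - x) \<bullet> g x"
    unfolding fe ge by (rule Ct_bounds(1)[OF R_fin deg_pos w_nonneg mup cb])
  have smooth: "\<And>x y. f x + (y - x) \<bullet> g x - L / 2 * (norm (y - x))\<^sup>2 \<le> f y"
  proof -
    fix x y :: "real^'n"
    have "L / 2 * (norm (y - x))\<^sup>2 = d * ((norm (y - x))\<^sup>2 / (8 * \<mu>))" using mup by (simp add: L_def)
    then show "f x + (y - x) \<bullet> g x - L / 2 * (norm (y - x))\<^sup>2 \<le> f y"
      unfolding fe ge using Ct_bounds(2)[OF R_fin deg_pos w_nonneg mup cb, of x y] by (simp add: d_def)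
  qed
  have lnn: "0 < ln n" using n2 by simp
  have tp: "0 < real t"
  proof -
    have "0 < 5.1 / \<epsilon> * n * sqrt (ln n)" using eps np lnn by simp
    then show ?thesis using t_large by (simp add: n_def)
  qed
  have t1: "1 \<le> t" using tp by simp
  have rate: "f X - f xt \<le> 2 * L * (norm (xg - X))\<^sup>2 / (real t)\<^sup>2"
    unfolding xt_def
    by (rule fista_rate[OF simplex_closed simplex_convex xgD _ Lp eL conc smooth t1])
       (simp add: X_def xstar_in)
  have dist: "(norm (xg - X))\<^sup>2 \<le> 2 * real k"
    unfolding xg_def by (rule dist_bound) (use xstar_in greedy_facts(1)[OF greedy] in \<open>auto simp: X_def\<close>)
  have "2 * L * (norm (xg - X))\<^sup>2 / (real t)\<^sup>2 \<le> 2 * L * (2 * real k) / (real t)\<^sup>2"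
    using dist Lp tp by (intro divide_right_mono mult_left_mono) auto
  also have "\<dots> = d * real k / (\<mu> * (real t)\<^sup>2)" using mup by (simp add: L_def field_simps)
  finally have fr: "f X - f xt \<le> d * real k / (\<mu> * (real t)\<^sup>2)" using rate by linarith
  have sm: "covC R N w \<phi> X - \<mu> * ln d \<le> f X"
    unfolding fe d_def
    by (rule smooth_err_vec[OF R_fin deg_pos w_nonneg w_sum phi_concave mup]) (use xstar_in dR in \<open>auto simp: X_def\<close>)
  have tl: "5.1 / \<epsilon> * n * sqrt (ln n) \<le> real t" using t_large by (simp add: n_def)
  have main: "(1 - \<epsilon>) * covC R N w \<phi> X \<le> f xt"
    by (rule final_arith[OF eps n2 d1 dn _ cge CXge cle tl tp \<mu>_def sm fr]) (use k_bounds in simp)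
  show ?thesis
    using main unfolding Let_def xt_def f_def g_def \<eta>_def \<mu>_def c_def d_def xg_def X_def by simp
qed


end
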